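(* Let $\Omega\subset\mathbb{R}^n$ be a bounded convex open set, and suppose there exists $R_0>0$ such that for every $z\in\partial\Omega$ there is a ball of radius at most $R_0$ containing $\Omega$ whose boundary contains $z$. Let $\rho\in(0,1)$ be a constant as described in the context, and let $r_0>0$. Let $x_0\in\Omega$ with $d_0:=d(x_0,\partial\Omega)$ satisfying $$d_0\le\min\Big(\frac{\rho^2}{16(1+4R_0)},\frac{r_0}{2},\frac14\Big),$$ let $v_0$ be a unit vector such that $x_\partial:=x_0+d_0v_0\in\partial\Omega$, set $\theta:=\sqrt{d_0/(6R_0)}$, and let $$E_\theta:=\{x\in\Omega\mid\langle x-x_0,-v_0\rangle\le\theta|x-x_0|\}.$$ Then $$E_\theta\subset B^n_{\sqrt{(1+4R_0)d_0}}(x_\partial)\subset B^n_{\rho/4}(x_\partial).$$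
   Context: $B^n_r(z)$ is the open ball in $\mathbb{R}^n$. The constant $\rho\in(0,1)$ (together with some $L>0$, $C_1>1$) is such that: for each $z\in\partial\Omega$, after a rotation and translation of coordinates, there is an $L$-Lipschitz function $\phi:B^{n-1}_\rho(0)\to(-C_1\rho,C_1\rho)$ with $\mathcal{C}_\rho\cap\Omega=\{(y',y_n)\in\mathcal{C}_\rho\mid y_n>\phi(y')\}$ and $z\in\mathcal{C}_{\rho/2}$, where $\mathcal{C}_r=B^{n-1}_r(0)\times(-2C_1r,2C_1r)$. *)

theory Defs
  imports "HOL-Analysis.Analysis"
begin

text \<open>Local coordinates after a rigid motion: origin p, unit "vertical" direction e.
  A point x has vertical coordinate y_n = (x - p) . e and horizontal coordinate
  y' = (x - p) - y_n e, which lies in the hyperplane orthogonal to e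
  (identified with R^(n-1)).\<close>

definition vcoord :: "'a::euclidean_space \<Rightarrow> 'a \<Rightarrow> 'a \<Rightarrow> real" where
  "vcoord p e x = (x - p) \<bullet> e"

definition hcoord :: "'a::euclidean_space \<Rightarrow> 'a \<Rightarrow> 'a \<Rightarrow> 'a" where
  "hcoord p e x = (x - p) - ((x - p) \<bullet> e) *\<^sub>R e"

definition cyl :: "'a::euclidean_space \<Rightarrow> 'a \<Rightarrow> real \<Rightarrow> real \<Rightarrow> 'a set" where
  "cyl p e C1 r = {x. norm (hcoord p e x) < r \<and> \<bar>vcoord p e x\<bar> < 2 * C1 * r}"

definition lip_graph_const :: "'a::euclidean_space set \<Rightarrow> real \<Rightarrow> bool" where
  "lip_graph_const \<Omega> \<rho> \<longleftrightarrow> 0 < \<rho> \<and> \<rho> < 1 \<and>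
     (\<exists>L C1. L > 0 \<and> C1 > 1 \<and>
       (\<forall>z\<in>frontier \<Omega>. \<exists>p e (\<phi> :: 'a \<Rightarrow> real).
          norm e = 1 \<and>
          L-lipschitz_on {y. y \<bullet> e = 0 \<and> norm y < \<rho>} \<phi> \<and>
          (\<forall>y. y \<bullet> e = 0 \<and> norm y < \<rho> \<longrightarrow> \<bar>\<phi> y\<bar> < C1 * \<rho>) \<and>
          cyl p e C1 \<rho> \<inter> \<Omega> = {x \<in> cyl p e C1 \<rho>. vcoord p e x > \<phi> (hcoord p e x)} \<and>
          z \<in> cyl p e C1 (\<rho> / 2)))"

end

theory Submission
  imports Defs
begin

lemma arith5p3:
  fixes a tt ss d R th :: real
  assumes a0: "0 \<le> a" and s0: "0 \<le> ss" and d0: "0 < d" and d14: "d \<le> 1/4"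
    and sR: "ss + d \<le> R" and R0: "0 < R" and th0: "th \<ge> 0" and th2: "th^2 = d/(6*R)"
    and tb: "tt \<ge> - th * a" and main: "a^2 + 2* ss*tt < 2* ss*d + d^2"
  shows "a^2 - 2*d*tt + d^2 < (1+4*R)*d"
proof -
  have "th^2 > 0" using th2 d0 R0 by simp
  hence thpos: "th > 0" using th0 by (cases "th = 0") auto
  have "2* ss*tt \<ge> -2* ss*th*a" proof -
    have "ss*tt \<ge> ss*(-th*a)" using tb s0 by (rule mult_left_mono)
    thus ?thesis by (simp add: mult_ac)
  qed
  hence A1: "a^2 < 2* ss*(th*a) + 2* ss*d + d^2" using main by (simp add: algebra_simps)
  have "2* ss*(th*a) + 2* ss*d \<le> 2*R*(th*a) + 2*R*d"
    using sR s0 d0 th0 a0 by (intro add_mono mult_right_mono) (auto intro: mult_nonneg_nonneg)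
  hence A2: "a^2 < 2*R*(th*a) + 2*R*d + d^2" using A1 by linarith
  define u where "u = th*a"
  have u0: "u \<ge> 0" using th0 a0 u_def by simp
  have "th^2 * a^2 < th^2 * (2*R*u + 2*R*d + d^2)"
    using A2 thpos u_def by (intro mult_strict_left_mono) auto
  hence "u^2 < d/(6*R) * (2*R*u + 2*R*d + d^2)" by (simp add: u_def power_mult_distrib th2)
  hence B: "u^2 < d*u/3 + d^2/3 + d^3/(6*R)" using R0 by (simp add: field_simps power3_eq_cube power2_eq_square)
  define U where "U = d*(1+2*R)/(2*R)"
  have UB: "U^2 \<ge> d*U/3 + d^2/3 + d^3/(6*R)"
  proof -
    define e where "e = 1/(2*R)"
    have e0: "e > 0" using R0 e_def by simp
    have Ue: "U = d*(1+e)" using R0 by (simp add: U_def e_def field_simps)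
    have de: "d^3/(6*R) = d^2*(d*e/3)" using R0 by (simp add: e_def field_simps power3_eq_cube power2_eq_square)
    have "d*e/3 \<le> e" using d14 e0 by (simp add: field_simps)
    moreover have "(1+e)^2 - (1+e)/3 - 1/3 \<ge> e" using e0 by (simp add: power2_eq_square field_simps)
    ultimately have "(1+e)^2 \<ge> (1+e)/3 + 1/3 + d*e/3" by linarith
    hence "d^2*(1+e)^2 \<ge> d^2*((1+e)/3 + 1/3 + d*e/3)" by (intro mult_left_mono) auto
    thus ?thesis unfolding Ue de by (simp add: power_mult_distrib field_simps power2_eq_square)
  qed
  have uU: "u \<le> U"
  proof (rule ccontr)
    assume "\<not> u \<le> U"
    hence uU: "u > U" by simp
    have U0: "U \<ge> d/3" using R0 d0 by (simp add: U_def field_simps)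
    have "u^2 - d*u/3 \<ge> U^2 - d*U/3"
    proof -
      have "u^2 - d*u/3 - (U^2 - d*U/3) = (u - U)*(u + U - d/3)" by (simp add: field_simps power2_eq_square)
      also have "\<dots> \<ge> 0" using uU U0 u0 by (intro mult_nonneg_nonneg) auto
      finally show ?thesis by simp
    qed
    thus False using B UB by linarith
  qed
  have X: "a^2 - 2*d*tt + d^2 < 2*(ss+d)*(d - tt)" using main by (simp add: algebra_simps power2_eq_square)
  show ?thesis
  proof (cases "d - tt \<le> 0")
    case True
    hence "2*(ss+d)*(d-tt) \<le> 0" using s0 d0 by (simp add: mult_nonneg_nonpos)
    thus ?thesis using X R0 d0 by (smt (verit) mult_pos_pos)
  next
    case False
    hence "2*(ss+d)*(d-tt) \<le> 2*R*(d-tt)" using sR by (intro mult_right_mono) auto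
    also have "\<dots> \<le> 2*R*(d + u)" using tb R0 by (simp add: u_def)
    also have "\<dots> \<le> 2*R*(d + U)" using uU R0 by simp
    also have "\<dots> = (1+4*R)*d" using R0 by (simp add: U_def field_simps)
    finally show ?thesis using X by linarith
  qed
qed

theorem lemma5p3:
  fixes \<Omega> :: "'a::euclidean_space set"
    and R0 \<rho> r0 :: real and x0 v0 :: 'a
  assumes "bounded \<Omega>" and "convex \<Omega>" and "open \<Omega>"
    and "R0 > 0"
    and "\<forall>z\<in>frontier \<Omega>. \<exists>c r. r \<le> R0 \<and> \<Omega> \<subseteq> ball c r \<and> z \<in> sphere c r"
    and "lip_graph_const \<Omega> \<rho>"
    and "r0 > 0"
    and "x0 \<in> \<Omega>"
    and "infdist x0 (frontier \<Omega>) \<le> min (\<rho>^2 / (16 * (1 + 4 * R0))) (min (r0 / 2) (1/4))"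
    and "norm v0 = 1"
    and "x0 + infdist x0 (frontier \<Omega>) *\<^sub>R v0 \<in> frontier \<Omega>"
  shows "let d0 = infdist x0 (frontier \<Omega>);
             xb = x0 + d0 *\<^sub>R v0;
             \<theta> = sqrt (d0 / (6 * R0));
             E = {x \<in> \<Omega>. (x - x0) \<bullet> (- v0) \<le> \<theta> * norm (x - x0)}
         in E \<subseteq> ball xb (sqrt ((1 + 4 * R0) * d0)) \<and>
            ball xb (sqrt ((1 + 4 * R0) * d0)) \<subseteq> ball xb (\<rho> / 4)"
proof -
  define d0 where "d0 = infdist x0 (frontier \<Omega>)"
  define xb where "xb = x0 + d0 *\<^sub>R v0"
  define th where "th = sqrt (d0 / (6 * R0))"
  define E where "E = {x \<in> \<Omega>. (x - x0) \<bullet> (- v0) \<le> th * norm (x - x0)}"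
  have R0: "R0 > 0" using assms(4) .
  have v1: "v0 \<bullet> v0 = 1" using assms(10) by (simp add: norm_eq_1)
  have xbf: "xb \<in> frontier \<Omega>" using assms(11) by (simp add: xb_def d0_def)
  have x0nf: "x0 \<notin> frontier \<Omega>" using assms(3,8) by (simp add: frontier_def interior_open)
  have d0pos: "d0 > 0" unfolding d0_def
    using infdist_pos_not_in_closed[OF frontier_closed _ x0nf] xbf by blast
  have d0le: "d0 \<le> \<rho>^2 / (16 * (1 + 4 * R0))" "d0 \<le> 1/4" using assms(9) by (auto simp: d0_def)
  have rho0: "\<rho> > 0" using assms(6) by (simp add: lip_graph_const_def)
  have ballsub: "ball x0 d0 \<subseteq> \<Omega>"
  proof
    fix y assume y: "y \<in> ball x0 d0"
    show "y \<in> \<Omega>"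
    proof (rule ccontr)
      assume yn: "y \<notin> \<Omega>"
      have "closed_segment x0 y \<inter> frontier \<Omega> \<noteq> {}"
        using connected_Int_frontier[of "closed_segment x0 y" \<Omega>] yn assms(8) by auto
      then obtain z where z: "z \<in> closed_segment x0 y" "z \<in> frontier \<Omega>" by blast
      have "dist x0 z \<le> dist x0 y" using z(1) using dist_in_closed_segment[OF z(1)] by (simp add: dist_commute)
      hence "dist x0 z < d0" using y by simp
      moreover have "d0 \<le> dist x0 z" unfolding d0_def using z(2) by (rule infdist_le)
      ultimately show False by simp
    qed
  qed
  obtain c r where cr: "r \<le> R0" "\<Omega> \<subseteq> ball c r" "xb \<in> sphere c r" using assms(5) xbf by blast
  have "ball x0 d0 \<subseteq> ball c r" using ballsub cr(2) by blast
  hence dc: "dist x0 c + d0 \<le> r" using d0pos unfolding ball_subset_ball_iff by linarith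
  define ss where "ss = r - d0"
  define q where "q = c - x0"
  have ss0: "ss \<ge> 0" using dc ss_def by (smt (verit) zero_le_dist)
  have nq: "norm q \<le> ss" using dc by (simp add: q_def ss_def dist_norm norm_minus_commute)
  have "norm (d0 *\<^sub>R v0 - q) = r" using cr(3) by (simp add: xb_def q_def dist_norm norm_minus_commute algebra_simps)
  hence "(d0 *\<^sub>R v0 - q) \<bullet> (d0 *\<^sub>R v0 - q) = r^2" by (metis power2_norm_eq_inner)
  hence eq1: "d0^2 - 2*d0*(q \<bullet> v0) + q \<bullet> q = (ss + d0)^2"
    by (simp add: ss_def inner_diff_left inner_diff_right v1 inner_commute power2_eq_square algebra_simps)
  have qq: "q \<bullet> q \<le> ss^2" using nq by (metis norm_ge_zero power2_norm_eq_inner power_mono)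
  have "2*d0* ss \<le> d0 * (-2*(q \<bullet> v0))" using eq1 qq by (simp add: power2_eq_square algebra_simps)
  hence "d0 * (2* ss) \<le> d0 * (-2*(q \<bullet> v0))" by (simp add: mult_ac)
  hence "2* ss \<le> -2*(q \<bullet> v0)" using d0pos by (simp only: mult_le_cancel_left_pos)
  hence qv: "q \<bullet> v0 \<le> -ss" by linarith
  have "(q + ss *\<^sub>R v0) \<bullet> (q + ss *\<^sub>R v0) = q \<bullet> q + 2* ss*(q \<bullet> v0) + ss^2"
    by (simp add: inner_add_left inner_add_right v1 inner_commute power2_eq_square algebra_simps)
  also have "\<dots> \<le> 0"
  proof -
    have "ss * (q \<bullet> v0) \<le> ss * (- ss)" using qv ss0 by (rule mult_left_mono)
    thus ?thesis using qq by (simp add: power2_eq_square)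
  qed
  finally have "\<not> 0 < (q + ss *\<^sub>R v0) \<bullet> (q + ss *\<^sub>R v0)" by linarith
  hence "q + ss *\<^sub>R v0 = 0" by (simp only: inner_gt_zero_iff not_not)
  hence cdef: "c = x0 - ss *\<^sub>R v0" by (simp add: q_def algebra_simps eq_neg_iff_add_eq_0)
  have th0: "th \<ge> 0" by (simp add: th_def d0pos R0 less_imp_le)
  have th2: "th^2 = d0/(6*R0)" using d0pos R0 by (simp add: th_def)
  have part1: "E \<subseteq> ball xb (sqrt ((1 + 4 * R0) * d0))"
  proof
    fix x assume xE: "x \<in> E"
    define w where "w = x - x0"
    have "x \<in> ball c r" using xE cr(2) by (auto simp: E_def)
    hence "norm (w + ss *\<^sub>R v0) < r" by (simp add: w_def cdef dist_norm norm_minus_commute algebra_simps)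
    hence "norm (w + ss *\<^sub>R v0)^2 < r^2" using norm_ge_zero by (rule power_strict_mono) auto
    hence "(w + ss *\<^sub>R v0) \<bullet> (w + ss *\<^sub>R v0) < (ss + d0)^2" by (simp add: power2_norm_eq_inner ss_def)
    moreover have "(w + ss *\<^sub>R v0) \<bullet> (w + ss *\<^sub>R v0) = w \<bullet> w + 2* ss*(w \<bullet> v0) + ss^2"
      by (simp add: inner_add_left inner_add_right v1 inner_commute power2_eq_square algebra_simps)
    moreover have "(norm w)^2 = w \<bullet> w" by (rule power2_norm_eq_inner)
    ultimately have main: "(norm w)^2 + 2 * ss * (w \<bullet> v0) < 2 * ss * d0 + d0^2"
      by (simp add: power2_eq_square algebra_simps)
    have tb: "w \<bullet> v0 \<ge> - th * norm w" using xE by (simp add: E_def w_def)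
    have "(norm w)^2 - 2*d0*(w \<bullet> v0) + d0^2 < (1+4*R0)*d0"
      by (rule arith5p3[OF norm_ge_zero ss0 d0pos d0le(2) _ R0 th0 th2 tb main]) (use cr(1) ss_def in simp)
    moreover have "(dist xb x)^2 = (norm w)^2 - 2*d0*(w \<bullet> v0) + d0^2"
    proof -
      have "dist xb x = norm (w - d0 *\<^sub>R v0)" by (simp add: dist_norm w_def xb_def norm_minus_commute algebra_simps)
      hence "(dist xb x)^2 = (w - d0 *\<^sub>R v0) \<bullet> (w - d0 *\<^sub>R v0)" by (simp add: power2_norm_eq_inner)
      also have "\<dots> = w \<bullet> w - 2*d0*(w \<bullet> v0) + d0^2"
        by (simp add: inner_diff_left inner_diff_right v1 inner_commute power2_eq_square algebra_simps)
      finally show ?thesis by (simp add: power2_norm_eq_inner)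
    qed
    ultimately have "(dist xb x)^2 < (1+4*R0)*d0" by simp
    thus "x \<in> ball xb (sqrt ((1 + 4 * R0) * d0))" by (simp add: real_less_rsqrt)
  qed
  have "(1 + 4 * R0) * d0 \<le> (\<rho>/4)^2"
  proof -
    have "(1 + 4 * R0) * d0 \<le> (1 + 4 * R0) * (\<rho>^2 / (16 * (1 + 4 * R0)))"
      using d0le(1) R0 by (intro mult_left_mono) auto
    also have "\<dots> = (\<rho>/4)^2" using R0 by (simp add: field_simps power2_eq_square)
    finally show ?thesis .
  qed
  hence "sqrt ((1 + 4 * R0) * d0) \<le> sqrt ((\<rho>/4)^2)" by (rule real_sqrt_le_mono)
  also have "\<dots> = \<rho>/4" using rho0 by simp
  finally have "sqrt ((1 + 4 * R0) * d0) \<le> \<rho>/4" .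
  hence part2: "ball xb (sqrt ((1 + 4 * R0) * d0)) \<subseteq> ball xb (\<rho> / 4)" by (rule subset_ball)
  show ?thesis unfolding Let_def using part1 part2 by (simp add: d0_def xb_def th_def E_def)
qed

end
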